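(* Let $I$ be a nonempty set, $1<p<\infty$, and for each $i\in I$ let $A_i:X_i\to Y_i$ be a bounded linear operator with $\sup_{i\in I}\|A_i\|<\infty$. Let $A:(\bigoplus_{i\in I}X_i)_{\ell_p(I)}\to(\bigoplus_{i\in I}Y_i)_{\ell_p(I)}$ be defined by $A|_{X_i}=A_i$. Then $\mathbf t_p(A)\le\sup_{i\in I}\max\{\mathbf t_p(A_i),\|A_i\|\}$. The analogous statement holds for $\mathbf t_\infty$ with the $\ell_p(I)$-direct sums replaced by $c_0(I)$-direct sums.
   Context: For an operator $B:X\to Y$ and $1<p<\infty$, $\mathbf t_p(B)$ is the infimum of those $C>0$ such that for every $y\in Y$, $\sigma>0$ and weakly null net $(x_\lambda)\subset\sigma B_X$, $\limsup_\lambda\|y+Bx_\lambda\|^p\le\|y\|^p+C^p\sigma^p$; $\mathbf t_\infty(B)$ is the infimum of those $C>0$ such that under the same quantifiers $\limsup_\lambda\|y+Bx_\lambda\|\le\max\{\|y\|,C\sigma\}$ (infimum of empty set $=\infty$). *)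

theory Defs
  imports "HOL-Analysis.Analysis" "HOL-Library.Function_Algebras"
begin

instantiation "fun" :: (type, real_vector) real_vector
begin
definition scaleR_fun :: "real \<Rightarrow> ('a \<Rightarrow> 'b) \<Rightarrow> 'a \<Rightarrow> 'b" where
  "scaleR_fun r f = (\<lambda>x. r *\<^sub>R f x)"
instance
  by standard (auto simp: scaleR_fun_def fun_eq_iff scaleR_add_right scaleR_add_left)
end

definition bounded_linear_on ::
  "'a::real_vector set \<Rightarrow> ('a \<Rightarrow> real) \<Rightarrow> 'b::real_vector set \<Rightarrow> ('b \<Rightarrow> real) \<Rightarrow> ('a \<Rightarrow> 'b) \<Rightarrow> bool" where
  "bounded_linear_on S NS T NT B \<longleftrightarrow>
     (\<forall>x\<in>S. B x \<in> T) \<and>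
     (\<forall>x\<in>S. \<forall>y\<in>S. B (x + y) = B x + B y) \<and>
     (\<forall>c. \<forall>x\<in>S. B (c *\<^sub>R x) = c *\<^sub>R B x) \<and>
     (\<exists>K. \<forall>x\<in>S. NT (B x) \<le> K * NS x)"

definition opnorm_on :: "'a set \<Rightarrow> ('a \<Rightarrow> real) \<Rightarrow> ('b \<Rightarrow> real) \<Rightarrow> ('a \<Rightarrow> 'b) \<Rightarrow> real" where
  "opnorm_on S NS NT B = Sup ((\<lambda>x. NT (B x)) ` {x\<in>S. NS x \<le> 1})"

text \<open>A net, given as a function on an index type together with a filter describing
  "eventually along the net", is weakly null in (S, NS) if every bounded linear
  functional on (S, NS) tends to 0 along it.\<close>
definition weakly_null ::
  "'a::real_vector set \<Rightarrow> ('a \<Rightarrow> real) \<Rightarrow> 'l filter \<Rightarrow> ('l \<Rightarrow> 'a) \<Rightarrow> bool" where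
  "weakly_null S NS F x \<longleftrightarrow>
     (\<forall>f. bounded_linear_on S NS (UNIV::real set) abs f \<longrightarrow> ((\<lambda>l. f (x l)) \<longlongrightarrow> 0) F)"

text \<open>Nets are represented by a filter on an
  index set (here the index type is the type of the space itself, which suffices:
  every net can be pushed forward to one indexed in this way with the same limit
  behaviour). The infimum of the empty set is infinity.\<close>
definition tp ::
  "real \<Rightarrow> 'a::real_vector set \<Rightarrow> ('a \<Rightarrow> real) \<Rightarrow> 'b::real_vector set \<Rightarrow> ('b \<Rightarrow> real) \<Rightarrow> ('a \<Rightarrow> 'b) \<Rightarrow> ereal" where
  "tp p S NS T NT B = Inf (ereal ` {C. C > 0 \<and>
     (\<forall>y\<in>T. \<forall>\<sigma>>0. \<forall>(F::'a filter) (x::'a \<Rightarrow> 'a).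
        (\<forall>l. x l \<in> S \<and> NS (x l) \<le> \<sigma>) \<and> weakly_null S NS F x \<longrightarrow>
        Limsup F (\<lambda>l. ereal (NT (y + B (x l)) powr p)) \<le> ereal (NT y powr p + C powr p * \<sigma> powr p))})"

definition tinf ::
  "'a::real_vector set \<Rightarrow> ('a \<Rightarrow> real) \<Rightarrow> 'b::real_vector set \<Rightarrow> ('b \<Rightarrow> real) \<Rightarrow> ('a \<Rightarrow> 'b) \<Rightarrow> ereal" where
  "tinf S NS T NT B = Inf (ereal ` {C. C > 0 \<and>
     (\<forall>y\<in>T. \<forall>\<sigma>>0. \<forall>(F::'a filter) (x::'a \<Rightarrow> 'a).
        (\<forall>l. x l \<in> S \<and> NS (x l) \<le> \<sigma>) \<and> weakly_null S NS F x \<longrightarrow>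
        Limsup F (\<lambda>l. ereal (NT (y + B (x l)))) \<le> ereal (max (NT y) (C * \<sigma>)))})"

text \<open>The spaces X i (i in I) are closed linear subspaces of a common Banach space;
  elements of the direct sum are functions vanishing outside I.\<close>
definition lp_sum :: "real \<Rightarrow> 'i set \<Rightarrow> ('i \<Rightarrow> 'x::real_normed_vector set) \<Rightarrow> ('i \<Rightarrow> 'x) set" where
  "lp_sum p I X = {x. (\<forall>i. i \<notin> I \<longrightarrow> x i = 0) \<and> (\<forall>i\<in>I. x i \<in> X i) \<and>
                      (\<lambda>i. norm (x i) powr p) summable_on I}"

definition lp_norm :: "real \<Rightarrow> 'i set \<Rightarrow> ('i \<Rightarrow> 'x::real_normed_vector) \<Rightarrow> real" where
  "lp_norm p I x = (\<Sum>\<^sub>\<infinity>i\<in>I. norm (x i) powr p) powr (1 / p)"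

definition c0_sum :: "'i set \<Rightarrow> ('i \<Rightarrow> 'x::real_normed_vector set) \<Rightarrow> ('i \<Rightarrow> 'x) set" where
  "c0_sum I X = {x. (\<forall>i. i \<notin> I \<longrightarrow> x i = 0) \<and> (\<forall>i\<in>I. x i \<in> X i) \<and>
                    (\<forall>\<epsilon>>0. finite {i\<in>I. norm (x i) \<ge> \<epsilon>})}"

definition sup_norm :: "'i set \<Rightarrow> ('i \<Rightarrow> 'x::real_normed_vector) \<Rightarrow> real" where
  "sup_norm I x = (SUP i\<in>I. norm (x i))"

definition diag_op :: "'i set \<Rightarrow> ('i \<Rightarrow> 'x \<Rightarrow> 'y::zero) \<Rightarrow> ('i \<Rightarrow> 'x) \<Rightarrow> 'i \<Rightarrow> 'y" where
  "diag_op I A x = (\<lambda>i. if i \<in> I then A i (x i) else 0)"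

end

theory Submission
  imports Defs
begin

lemma conv_ineq:
  fixes a b d p :: real
  assumes "a \<ge> 0" "b \<ge> 0" "d > 0" "p \<ge> 1"
  shows "(a + b) powr p \<le> (1 + d) powr (p - 1) * b powr p + (1 + 1/d) powr (p - 1) * a powr p"
proof (cases "a = 0 \<or> b = 0")
  case True
  have g1: "(1 + d) powr (p - 1) \<ge> 1" "(1 + 1/d) powr (p - 1) \<ge> 1"
    using assms by (auto intro!: ge_one_powr_ge_zero)
  show ?thesis
  proof (cases "a = 0")
    case True
    then show ?thesis using g1 assms
      by (smt (verit) mult_le_cancel_right1 powr_ge_zero mult_nonneg_nonneg)
  next
    case False
    then have "b = 0" using \<open>a = 0 \<or> b = 0\<close> by auto
    then show ?thesis using g1 assms
      by (smt (verit) mult_le_cancel_right1 powr_ge_zero mult_nonneg_nonneg)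
  qed
next
  case False
  then have ab: "a > 0" "b > 0" using assms by auto
  define t where "t = d / (1 + d)"
  have t: "t \<ge> 0" "t \<le> 1" using assms by (auto simp: t_def)
  have 1: "1 - t = 1 / (1 + d)" using assms by (simp add: t_def field_simps)
  have e: "(1 - t) *\<^sub>R ((1 + d) * b) + t *\<^sub>R ((1 + d) / d * a) = a + b"
  proof -
    have "(1 - t) * ((1 + d) * b) = b" using assms by (simp add: 1)
    moreover have "t * ((1 + d) / d * a) = a" using assms by (simp add: t_def)
    ultimately show ?thesis by simp
  qed
  have "(a + b) powr p \<le> (1 - t) * ((1 + d) * b) powr p + t * ((1 + d) / d * a) powr p"
    using convex_onD[OF powr_convex[OF assms(4)] t, of "(1 + d) * b" "(1 + d) / d * a"] ab assms e
    by simp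
  also have "(1 - t) * ((1 + d) * b) powr p = (1 + d) powr (p - 1) * b powr p"
    using assms by (simp add: 1 powr_mult powr_diff)
  also have "t * ((1 + d) / d * a) powr p = (1 + 1/d) powr (p - 1) * a powr p"
  proof -
    have "(1 + d) / d = 1 + 1/d" using assms by (simp add: field_simps)
    moreover have "t = 1 / (1 + 1/d)" using assms by (simp add: t_def field_simps)
    ultimately show ?thesis using assms by (simp add: powr_mult powr_diff)
  qed
  finally show ?thesis .
qed
lemma blo_zero:
  assumes "bounded_linear_on S NS T NT B" "subspace S"
  shows "B 0 = 0"
proof -
  have "0 \<in> S" using assms(2) by (simp add: subspace_0)
  then have "B (0 *\<^sub>R 0) = 0 *\<^sub>R B 0" using assms(1) unfolding bounded_linear_on_def by blast
  then show ?thesis by simp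
qed

lemma opnorm_facts:
  assumes "bounded_linear_on S norm T norm B" "subspace S"
  shows "bdd_above ((\<lambda>x. norm (B x)) ` {x\<in>S. norm x \<le> 1})"
    and "opnorm_on S norm norm B \<ge> 0"
    and "\<And>v. v \<in> S \<Longrightarrow> norm (B v) \<le> opnorm_on S norm norm B * norm v"
proof -
  obtain K where K: "\<forall>x\<in>S. norm (B x) \<le> K * norm x" using assms(1) unfolding bounded_linear_on_def by blast
  show bdd: "bdd_above ((\<lambda>x. norm (B x)) ` {x\<in>S. norm x \<le> 1})"
  proof (rule bdd_aboveI2)
    fix x assume "x \<in> {x\<in>S. norm x \<le> 1}"
    then have "norm (B x) \<le> K * norm x" "norm x \<le> 1" using K by auto
    then show "norm (B x) \<le> max K 0"
    proof (cases "K \<ge> 0")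
      case True
      then have "K * norm x \<le> K * 1" using \<open>norm x \<le> 1\<close> by (intro mult_left_mono) auto
      then show ?thesis using \<open>norm (B x) \<le> K * norm x\<close> by simp
    next
      case False
      then have "K * norm x \<le> 0" by (simp add: mult_nonpos_nonneg)
      then show ?thesis using \<open>norm (B x) \<le> K * norm x\<close> by simp
    qed
  qed
  have z: "0 \<in> {x\<in>S. norm x \<le> 1}" using assms(2) by (simp add: subspace_0)
  have B0: "B 0 = 0" by (rule blo_zero[OF assms])
  show nn: "opnorm_on S norm norm B \<ge> 0"
    unfolding opnorm_on_def using cSup_upper[OF imageI[OF z] bdd] B0 by simp
  fix v assume v: "v \<in> S"
  show "norm (B v) \<le> opnorm_on S norm norm B * norm v"
  proof (cases "v = 0")
    case True then show ?thesis using B0 by simp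
  next
    case False
    define w where "w = (1 / norm v) *\<^sub>R v"
    have wS: "w \<in> S" using assms(2) v by (simp add: w_def subspace_scale)
    have nw: "norm w \<le> 1" using False by (simp add: w_def)
    have "B w = (1 / norm v) *\<^sub>R B v" using assms(1) v unfolding bounded_linear_on_def w_def by blast
    then have "norm (B w) = norm (B v) / norm v" by simp
    moreover have "norm (B w) \<le> opnorm_on S norm norm B"
      unfolding opnorm_on_def using wS nw by (intro cSup_upper[OF _ bdd]) auto
    ultimately show ?thesis using False by (simp add: divide_le_eq mult.commute)
  qed
qed

lemma frequently_bot_iff:
  "inf G (principal {l. P l}) \<noteq> bot \<longleftrightarrow> frequently P G"
  unfolding frequently_def trivial_limit_def eventually_inf_principal by auto

lemma tp_pointwise:
  fixes S :: "'x::real_normed_vector set" and T :: "'y::real_normed_vector set" and B :: "'x \<Rightarrow> 'y"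
    and z :: "'l \<Rightarrow> 'x" and G :: "'l filter"
  assumes tpC: "tp p S norm T norm B < ereal C" and C: "C > 0" and p: "p > 0" and S0: "0 \<in> S"
    and y: "y \<in> T" and wn: "weakly_null S norm G z" and zb: "\<forall>l. z l \<in> S \<and> norm (z l) \<le> M"
    and e: "e > 0"
  shows "eventually (\<lambda>l. norm (y + B (z l)) powr p \<le> norm y powr p + C powr p * norm (z l) powr p + e) G"
proof (rule ccontr)
  obtain C' where C'pos: "C' > 0" and C'le: "C' < C" and cond: "\<forall>y\<in>T. \<forall>\<sigma>>0. \<forall>(F::'x filter) (x::'x \<Rightarrow> 'x).
        (\<forall>l. x l \<in> S \<and> norm (x l) \<le> \<sigma>) \<and> weakly_null S norm F x \<longrightarrow>
        Limsup F (\<lambda>l. ereal (norm (y + B (x l)) powr p)) \<le> ereal (norm y powr p + C' powr p * \<sigma> powr p)"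
    using tpC unfolding tp_def Inf_less_iff by auto
  define Q where "Q l \<longleftrightarrow> norm (y + B (z l)) powr p > norm y powr p + C powr p * norm (z l) powr p + e" for l
  assume "\<not> ?thesis"
  then have fQ: "frequently Q G" unfolding Q_def not_eventually by (simp add: not_le)
  define h where "h = e / (2 * C powr p)"
  have hpos: "h > 0" using e C by (simp add: h_def)
  define u where "u l = norm (z l) powr p" for l
  have M0: "M \<ge> 0" using zb norm_ge_zero order_trans by blast
  define N where "N = nat \<lceil>M powr p / h\<rceil> + 1"
  define kk where "kk l = nat \<lfloor>u l / h\<rfloor>" for l
  have kk: "kk l < N \<and> real (kk l) * h \<le> u l \<and> u l \<le> (real (kk l) + 1) * h" for l
  proof -
    have u0: "u l \<ge> 0" by (simp add: u_def)
    have uM: "u l \<le> M powr p" unfolding u_def using zb p by (auto intro!: powr_mono2)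
    have "u l / h \<le> M powr p / h" using uM hpos by (simp add: divide_right_mono)
    then have "\<lfloor>u l / h\<rfloor> \<le> \<lceil>M powr p / h\<rceil>"
      by (meson floor_le_ceiling floor_mono order_trans le_of_int_ceiling ceiling_mono)
    then have a: "kk l < N" unfolding kk_def N_def by linarith
    have f0: "\<lfloor>u l / h\<rfloor> \<ge> 0" using u0 hpos by simp
    have "real (kk l) = of_int \<lfloor>u l / h\<rfloor>" unfolding kk_def using f0 by simp
    moreover have "of_int \<lfloor>u l / h\<rfloor> \<le> u l / h" "u l / h < of_int \<lfloor>u l / h\<rfloor> + 1" by linarith+
    ultimately have "real (kk l) \<le> u l / h" "u l / h \<le> real (kk l) + 1" by auto
    then show ?thesis using a hpos by (simp add: field_simps)
  qed
  define E where "E k = {l. Q l \<and> real k * h \<le> u l \<and> u l \<le> (real k + 1) * h}" for k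
  have "\<exists>k<N. frequently (\<lambda>l. l \<in> E k) G"
  proof (rule ccontr)
    assume "\<not> ?thesis"
    then have "\<forall>k\<in>{..<N}. eventually (\<lambda>l. l \<notin> E k) G" by (auto simp: frequently_def)
    then have "eventually (\<lambda>l. \<forall>k\<in>{..<N}. l \<notin> E k) G" by (intro eventually_ball_finite) auto
    then have "eventually (\<lambda>l. \<not> Q l) G"
      by (rule eventually_mono) (use kk in \<open>auto simp: E_def\<close>)
    then show False using fQ by (simp add: frequently_def)
  qed
  then obtain k where fk: "frequently (\<lambda>l. l \<in> E k) G" by blast
  define G' where "G' = inf G (principal (E k))"
  have G'nb: "G' \<noteq> bot" using fk frequently_bot_iff[of G "\<lambda>l. l \<in> E k"] by (simp add: G'_def)
  have evE: "eventually (\<lambda>l. l \<in> E k) G'" unfolding G'_def eventually_inf_principal by simp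
  define \<sigma> where "\<sigma> = ((real k + 1) * h) powr (1 / p)"
  have \<sigma>pos: "\<sigma> > 0" using hpos by (simp add: \<sigma>_def)
  have \<sigma>p: "\<sigma> powr p = (real k + 1) * h" using hpos p by (simp add: \<sigma>_def powr_powr)
  have zE: "norm (z l) \<le> \<sigma>" if "l \<in> E k" for l
  proof -
    have "u l \<le> (real k + 1) * h" using that by (simp add: E_def)
    then have "u l powr (1/p) \<le> \<sigma>" unfolding \<sigma>_def using p by (intro powr_mono2) (auto simp: u_def)
    moreover have "u l powr (1/p) = norm (z l)" using p by (simp add: u_def powr_powr)
    ultimately show ?thesis by simp
  qed
  define w where "w v = (if v \<in> S \<and> norm v \<le> \<sigma> then v else 0)" for v
  define H where "H = filtermap z G'"
  have wprop: "\<forall>v. w v \<in> S \<and> norm (w v) \<le> \<sigma>" using S0 \<sigma>pos by (simp add: w_def)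
  have wzE: "eventually (\<lambda>l. w (z l) = z l) G'"
    using evE by (rule eventually_mono) (use zb zE in \<open>auto simp: w_def\<close>)
  have wnH: "weakly_null S norm H w"
    unfolding weakly_null_def
  proof (intro allI impI)
    fix f :: "'x \<Rightarrow> real" assume f: "bounded_linear_on S norm UNIV abs f"
    have "((\<lambda>l. f (z l)) \<longlongrightarrow> 0) G" using wn f unfolding weakly_null_def by blast
    then have "((\<lambda>l. f (z l)) \<longlongrightarrow> 0) G'" by (rule tendsto_mono[rotated]) (simp add: G'_def)
    then have "((\<lambda>l. f (w (z l))) \<longlongrightarrow> 0) G'"
      by (rule iffD1[OF tendsto_cong, rotated]) (use wzE in \<open>auto elim: eventually_mono\<close>)
    then show "((\<lambda>v. f (w v)) \<longlongrightarrow> 0) H" unfolding H_def filterlim_filtermap by simp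
  qed
  have up: "Limsup H (\<lambda>v. ereal (norm (y + B (w v)) powr p)) \<le> ereal (norm y powr p + C' powr p * \<sigma> powr p)"
    using cond y \<sigma>pos wprop wnH by blast
  have "C' powr p \<le> C powr p" using C'pos C'le p by (intro powr_mono2) auto
  then have "C' powr p * \<sigma> powr p \<le> C powr p * ((real k + 1) * h)"
    using \<sigma>p hpos by (simp add: mult_right_mono)
  also have "C powr p * ((real k + 1) * h) = C powr p * (real k * h) + e / 2"
    using C by (simp add: h_def field_simps)
  finally have up2: "Limsup H (\<lambda>v. ereal (norm (y + B (w v)) powr p)) \<le> ereal (norm y powr p + C powr p * (real k * h) + e / 2)"
    using up by (smt (verit) ereal_less_eq(3) order_trans)
  have low: "eventually (\<lambda>l. ereal (norm y powr p + C powr p * (real k * h) + e) \<le> ereal (norm (y + B (w (z l))) powr p)) G'"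
    using evE wzE
  proof eventually_elim
    case (elim l)
    then have "Q l" "real k * h \<le> u l" by (auto simp: E_def)
    then have "C powr p * (real k * h) \<le> C powr p * norm (z l) powr p" by (intro mult_left_mono) (auto simp: u_def)
    then show ?case using \<open>Q l\<close> elim(2) by (simp add: Q_def)
  qed
  have "ereal (norm y powr p + C powr p * (real k * h) + e) \<le> Liminf G' (\<lambda>l. ereal (norm (y + B (w (z l))) powr p))"
    by (rule Liminf_bounded[OF low])
  also have "\<dots> \<le> Limsup G' (\<lambda>l. ereal (norm (y + B (w (z l))) powr p))" by (rule Liminf_le_Limsup[OF G'nb])
  also have "\<dots> \<le> Limsup H (\<lambda>v. ereal (norm (y + B (w v)) powr p))" unfolding H_def by (rule Limsup_filtermap_ge)
  finally have "ereal (norm y powr p + C powr p * (real k * h) + e) \<le> ereal (norm y powr p + C powr p * (real k * h) + e / 2)"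
    using up2 by (rule order_trans)
  then show False using e by simp
qed

lemma tinf_pointwise:
  fixes S :: "'x::real_normed_vector set" and T :: "'y::real_normed_vector set" and B :: "'x \<Rightarrow> 'y"
    and z :: "'l \<Rightarrow> 'x" and G :: "'l filter"
  assumes tpC: "tinf S norm T norm B < ereal C" and C: "C > 0" and S0: "0 \<in> S"
    and y: "y \<in> T" and wn: "weakly_null S norm G z" and zb: "\<forall>l. z l \<in> S \<and> norm (z l) \<le> M"
    and e: "e > 0"
  shows "eventually (\<lambda>l. norm (y + B (z l)) \<le> max (norm y) (C * norm (z l)) + e) G"
proof (rule ccontr)
  obtain C' where C'pos: "C' > 0" and C'le: "C' < C" and cond: "\<forall>y\<in>T. \<forall>\<sigma>>0. \<forall>(F::'x filter) (x::'x \<Rightarrow> 'x).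
        (\<forall>l. x l \<in> S \<and> norm (x l) \<le> \<sigma>) \<and> weakly_null S norm F x \<longrightarrow>
        Limsup F (\<lambda>l. ereal (norm (y + B (x l)))) \<le> ereal (max (norm y) (C' * \<sigma>))"
    using tpC unfolding tinf_def Inf_less_iff by auto
  define Q where "Q l \<longleftrightarrow> norm (y + B (z l)) > max (norm y) (C * norm (z l)) + e" for l
  assume "\<not> ?thesis"
  then have fQ: "frequently Q G" unfolding Q_def not_eventually by (simp add: not_le)
  define h where "h = e / (2 * C)"
  have hpos: "h > 0" using e C by (simp add: h_def)
  define u where "u l = norm (z l)" for l
  define N where "N = nat \<lceil>M / h\<rceil> + 1"
  define kk where "kk l = nat \<lfloor>u l / h\<rfloor>" for l
  have kk: "kk l < N \<and> real (kk l) * h \<le> u l \<and> u l \<le> (real (kk l) + 1) * h" for l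
  proof -
    have u0: "u l \<ge> 0" by (simp add: u_def)
    have uM: "u l \<le> M" unfolding u_def using zb by auto
    have "u l / h \<le> M / h" using uM hpos by (simp add: divide_right_mono)
    then have "\<lfloor>u l / h\<rfloor> \<le> \<lceil>M / h\<rceil>"
      by (meson floor_le_ceiling floor_mono order_trans le_of_int_ceiling ceiling_mono)
    then have a: "kk l < N" unfolding kk_def N_def by linarith
    have f0: "\<lfloor>u l / h\<rfloor> \<ge> 0" using u0 hpos by simp
    have "real (kk l) = of_int \<lfloor>u l / h\<rfloor>" unfolding kk_def using f0 by simp
    moreover have "of_int \<lfloor>u l / h\<rfloor> \<le> u l / h" "u l / h < of_int \<lfloor>u l / h\<rfloor> + 1" by linarith+
    ultimately have "real (kk l) \<le> u l / h" "u l / h \<le> real (kk l) + 1" by auto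
    then show ?thesis using a hpos by (simp add: field_simps)
  qed
  define E where "E k = {l. Q l \<and> real k * h \<le> u l \<and> u l \<le> (real k + 1) * h}" for k
  have "\<exists>k<N. frequently (\<lambda>l. l \<in> E k) G"
  proof (rule ccontr)
    assume "\<not> ?thesis"
    then have "\<forall>k\<in>{..<N}. eventually (\<lambda>l. l \<notin> E k) G" by (auto simp: frequently_def)
    then have "eventually (\<lambda>l. \<forall>k\<in>{..<N}. l \<notin> E k) G" by (intro eventually_ball_finite) auto
    then have "eventually (\<lambda>l. \<not> Q l) G"
      by (rule eventually_mono) (use kk in \<open>auto simp: E_def\<close>)
    then show False using fQ by (simp add: frequently_def)
  qed
  then obtain k where fk: "frequently (\<lambda>l. l \<in> E k) G" by blast
  define G' where "G' = inf G (principal (E k))"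
  have G'nb: "G' \<noteq> bot" using fk frequently_bot_iff[of G "\<lambda>l. l \<in> E k"] by (simp add: G'_def)
  have evE: "eventually (\<lambda>l. l \<in> E k) G'" unfolding G'_def eventually_inf_principal by simp
  define \<sigma> where "\<sigma> = (real k + 1) * h"
  have \<sigma>pos: "\<sigma> > 0" using hpos by (simp add: \<sigma>_def)
  have zE: "norm (z l) \<le> \<sigma>" if "l \<in> E k" for l
    using that by (simp add: E_def u_def \<sigma>_def)
  define w where "w v = (if v \<in> S \<and> norm v \<le> \<sigma> then v else 0)" for v
  define H where "H = filtermap z G'"
  have wprop: "\<forall>v. w v \<in> S \<and> norm (w v) \<le> \<sigma>" using S0 \<sigma>pos by (simp add: w_def)
  have wzE: "eventually (\<lambda>l. w (z l) = z l) G'"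
    using evE by (rule eventually_mono) (use zb zE in \<open>auto simp: w_def\<close>)
  have wnH: "weakly_null S norm H w"
    unfolding weakly_null_def
  proof (intro allI impI)
    fix f :: "'x \<Rightarrow> real" assume f: "bounded_linear_on S norm UNIV abs f"
    have "((\<lambda>l. f (z l)) \<longlongrightarrow> 0) G" using wn f unfolding weakly_null_def by blast
    then have "((\<lambda>l. f (z l)) \<longlongrightarrow> 0) G'" by (rule tendsto_mono[rotated]) (simp add: G'_def)
    then have "((\<lambda>l. f (w (z l))) \<longlongrightarrow> 0) G'"
      by (rule iffD1[OF tendsto_cong, rotated]) (use wzE in \<open>auto elim: eventually_mono\<close>)
    then show "((\<lambda>v. f (w v)) \<longlongrightarrow> 0) H" unfolding H_def filterlim_filtermap by simp
  qed
  have up: "Limsup H (\<lambda>v. ereal (norm (y + B (w v)))) \<le> ereal (max (norm y) (C' * \<sigma>))"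
    using cond y \<sigma>pos wprop wnH by blast
  have "C' * \<sigma> \<le> C * \<sigma>" using C'le \<sigma>pos by simp
  also have "C * \<sigma> = C * (real k * h) + e / 2"
    using C by (simp add: h_def \<sigma>_def field_simps)
  finally have "max (norm y) (C' * \<sigma>) \<le> max (norm y) (C * (real k * h)) + e / 2" using e by linarith
  then have up2: "Limsup H (\<lambda>v. ereal (norm (y + B (w v)))) \<le> ereal (max (norm y) (C * (real k * h)) + e / 2)"
    using up by (meson ereal_less_eq(3) order_trans)
  have low: "eventually (\<lambda>l. ereal (max (norm y) (C * (real k * h)) + e) \<le> ereal (norm (y + B (w (z l))))) G'"
    using evE wzE
  proof eventually_elim
    case (elim l)
    then have "Q l" "real k * h \<le> u l" by (auto simp: E_def)
    then have "C * (real k * h) \<le> C * norm (z l)" using C by (intro mult_left_mono) (auto simp: u_def)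
    then show ?case using \<open>Q l\<close> elim(2) by (simp add: Q_def)
  qed
  have "ereal (max (norm y) (C * (real k * h)) + e) \<le> Liminf G' (\<lambda>l. ereal (norm (y + B (w (z l)))))"
    by (rule Liminf_bounded[OF low])
  also have "\<dots> \<le> Limsup G' (\<lambda>l. ereal (norm (y + B (w (z l)))))" by (rule Liminf_le_Limsup[OF G'nb])
  also have "\<dots> \<le> Limsup H (\<lambda>v. ereal (norm (y + B (w v))))" unfolding H_def by (rule Limsup_filtermap_ge)
  finally have "ereal (max (norm y) (C * (real k * h)) + e) \<le> ereal (max (norm y) (C * (real k * h)) + e / 2)"
    using up2 by (rule order_trans)
  then show False using e by simp
qed

lemma coord_wn:
  fixes SS :: "('i \<Rightarrow> 'x::real_normed_vector) set"
  assumes "\<forall>v\<in>SS. v i \<in> X" "\<forall>v\<in>SS. norm (v i) \<le> N v" "weakly_null SS N F x"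
  shows "weakly_null X norm F (\<lambda>l. x l i)"
  unfolding weakly_null_def
proof (intro allI impI)
  fix f :: "'x \<Rightarrow> real" assume f: "bounded_linear_on X norm UNIV abs f"
  obtain K where K: "\<forall>v\<in>X. \<bar>f v\<bar> \<le> K * norm v" using f unfolding bounded_linear_on_def by blast
  have "bounded_linear_on SS N UNIV abs (\<lambda>v. f (v i))"
    unfolding bounded_linear_on_def
  proof (intro conjI ballI allI)
    fix v w assume "v \<in> SS" "w \<in> SS"
    then show "f ((v + w) i) = f (v i) + f (w i)" using f assms(1) unfolding bounded_linear_on_def by simp
  next
    fix c v assume "v \<in> SS"
    then show "f ((c *\<^sub>R v) i) = c *\<^sub>R f (v i)" using f assms(1) unfolding bounded_linear_on_def
      by (simp add: scaleR_fun_def)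
  next
    show "\<exists>K. \<forall>v\<in>SS. \<bar>f (v i)\<bar> \<le> K * N v"
    proof (intro exI ballI)
      fix v assume v: "v \<in> SS"
      have "\<bar>f (v i)\<bar> \<le> K * norm (v i)" using K assms(1) v by blast
      also have "\<dots> \<le> max K 0 * norm (v i)" by (intro mult_right_mono) auto
      also have "\<dots> \<le> max K 0 * N v" using assms(2) v by (intro mult_left_mono) auto
      finally show "\<bar>f (v i)\<bar> \<le> max K 0 * N v" .
    qed
  qed simp
  then show "((\<lambda>l. f (x l i)) \<longlongrightarrow> 0) F" using assms(3) unfolding weakly_null_def by blast
qed

lemma lp_summable: "x \<in> lp_sum p I X \<Longrightarrow> (\<lambda>i. norm (x i) powr p) summable_on I"
  by (simp add: lp_sum_def)

lemma lp_norm_pow: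
  assumes "p > 0" shows "lp_norm p I x powr p = (\<Sum>\<^sub>\<infinity>i\<in>I. norm (x i) powr p)"
proof -
  have "(\<Sum>\<^sub>\<infinity>i\<in>I. norm (x i) powr p) \<ge> 0" by (intro infsum_nonneg) auto
  then show ?thesis using assms unfolding lp_norm_def by (simp add: powr_powr)
qed

lemma lp_coord:
  assumes "p > 0" "x \<in> lp_sum p I X" "i \<in> I"
  shows "norm (x i) \<le> lp_norm p I x"
proof -
  have "infsum (\<lambda>i. norm (x i) powr p) {i} \<le> infsum (\<lambda>i. norm (x i) powr p) I"
    using assms by (intro infsum_mono2) (auto intro: lp_summable)
  then have "norm (x i) powr p \<le> infsum (\<lambda>i. norm (x i) powr p) I" by simp
  then have "(norm (x i) powr p) powr (1/p) \<le> lp_norm p I x"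
    unfolding lp_norm_def using assms(1) by (intro powr_mono2) auto
  then show ?thesis using assms(1) by (simp add: powr_powr)
qed

lemma c0_bdd:
  assumes "x \<in> c0_sum I X" shows "bdd_above ((\<lambda>i. norm (x i)) ` I)"
proof -
  define F where "F = {i\<in>I. norm (x i) \<ge> 1}"
  have fin: "finite F" using assms unfolding c0_sum_def F_def by auto
  show ?thesis
  proof (rule bdd_aboveI2)
    fix i assume i: "i \<in> I"
    show "norm (x i) \<le> 1 + (\<Sum>j\<in>F. norm (x j))"
    proof (cases "i \<in> F")
      case True
      then have "norm (x i) \<le> (\<Sum>j\<in>F. norm (x j))" using fin by (intro member_le_sum) auto
      then show ?thesis by simp
    next
      case False
      then have "norm (x i) < 1" using i by (auto simp: F_def)
      moreover have "(\<Sum>j\<in>F. norm (x j)) \<ge> 0" by (intro sum_nonneg) auto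
      ultimately show ?thesis by simp
    qed
  qed
qed

lemma c0_coord:
  assumes "x \<in> c0_sum I X" "i \<in> I"
  shows "norm (x i) \<le> sup_norm I x"
  unfolding sup_norm_def using c0_bdd[OF assms(1)] assms(2) by (rule cSUP_upper2) simp

lemma infsum_split_fin:
  fixes f :: "'a \<Rightarrow> real"
  assumes "f summable_on I" "finite J" "J \<subseteq> I"
  shows "infsum f I = sum f J + infsum f (I - J)"
proof -
  have "I = J \<union> (I - J)" using assms by auto
  then have "infsum f I = infsum f (J \<union> (I - J))" by simp
  also have "\<dots> = infsum f J + infsum f (I - J)"
    using assms by (intro infsum_Un_disjoint) (auto intro: summable_on_subset_banach)
  finally show ?thesis using assms(2) by (simp add: infsum_finite)
qed

lemma small_delta:
  fixes p \<eta> :: real assumes "\<eta> > 0"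
  shows "\<exists>d>0. (1 + d) powr (p - 1) - 1 < \<eta>"
proof -
  have "((\<lambda>d::real. (1 + d) powr (p - 1)) \<longlongrightarrow> (1 + 0) powr (p - 1)) (at_right 0)"
    by (intro tendsto_powr tendsto_add tendsto_const tendsto_ident_at) simp
  then have "((\<lambda>d::real. (1 + d) powr (p - 1)) \<longlongrightarrow> 1) (at_right 0)" by simp
  then have "eventually (\<lambda>d. dist ((1 + d) powr (p - 1)) 1 < \<eta>) (at_right (0::real))"
    using assms by (rule tendstoD)
  then obtain b where "b > 0" "\<forall>y>0. y < b \<longrightarrow> dist ((1 + y) powr (p - 1)) 1 < \<eta>"
    unfolding eventually_at_right_field by auto
  then have "dist ((1 + b/2) powr (p - 1)) 1 < \<eta>" by auto
  then show ?thesis using \<open>b > 0\<close> by (intro exI[of _ "b/2"]) (auto simp: dist_real_def)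
qed

lemma lp_main:
  fixes I :: "'i set" and X :: "'i \<Rightarrow> 'x::real_normed_vector set" and Y :: "'i \<Rightarrow> 'y::real_normed_vector set"
    and A :: "'i \<Rightarrow> 'x \<Rightarrow> 'y" and x :: "'l \<Rightarrow> 'i \<Rightarrow> 'x" and F :: "'l filter"
  assumes p: "1 < p" and C: "C > 0"
    and Xs: "\<forall>i\<in>I. subspace (X i)"
    and bl: "\<forall>i\<in>I. bounded_linear_on (X i) norm (Y i) norm (A i)"
    and Cge: "\<forall>i\<in>I. opnorm_on (X i) norm norm (A i) \<le> C"
    and tpC: "\<forall>i\<in>I. tp p (X i) norm (Y i) norm (A i) < ereal C"
    and y: "y \<in> lp_sum p I Y" and \<sigma>: "\<sigma> > 0"
    and xb: "\<forall>l. x l \<in> lp_sum p I X \<and> lp_norm p I (x l) \<le> \<sigma>"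
    and wn: "weakly_null (lp_sum p I X) (lp_norm p I) F x"
  shows "Limsup F (\<lambda>l. ereal (lp_norm p I (y + diag_op I A (x l)) powr p))
           \<le> ereal (lp_norm p I y powr p + C powr p * \<sigma> powr p)"
proof (rule ereal_le_epsilon2)
  fix e :: real assume e: "e > 0"
  have p0: "p > 0" using p by simp
  define Ny where "Ny = (\<lambda>i. norm (y i) powr p)"
  have sNy: "Ny summable_on I" using y by (simp add: Ny_def lp_summable)
  have Sy: "lp_norm p I y powr p = infsum Ny I" using lp_norm_pow[OF p0] by (simp add: Ny_def)
  define Cp where "Cp = C powr p"
  have Cp0: "Cp > 0" using C by (simp add: Cp_def)
  define SP where "SP = Cp * \<sigma> powr p"
  have SP0: "SP \<ge> 0" using Cp0 by (simp add: SP_def)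
  obtain d where d: "d > 0" "(1 + d) powr (p - 1) - 1 < e / (3 * (SP + 1))"
    using small_delta[of "e / (3 * (SP + 1))" p] e SP0 by auto
  define q where "q = (1 + d) powr (p - 1)"
  have q1: "q \<ge> 1" using d p by (auto simp: q_def intro!: ge_one_powr_ge_zero)
  have qSP: "(q - 1) * SP \<le> e / 3"
  proof -
    have "(q - 1) * SP \<le> (e / (3 * (SP + 1))) * SP" using d SP0 by (intro mult_right_mono) (auto simp: q_def)
    also have "\<dots> \<le> (e / (3 * (SP + 1))) * (SP + 1)" using e SP0 by (intro mult_left_mono) auto
    also have "\<dots> = e / 3" using SP0 by (simp add: field_simps)
    finally show ?thesis .
  qed
  define Kd where "Kd = (1 + 1/d) powr (p - 1)"
  have "1 + 1/d > 0" using d by (simp add: add_pos_pos)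
  then have Kd0: "Kd > 0" by (simp add: Kd_def)
  obtain J where J: "finite J" "J \<subseteq> I" "dist (sum Ny J) (infsum Ny I) \<le> e / (3 * Kd)"
    using infsum_finite_approximation[OF sNy, of "e / (3 * Kd)"] e Kd0 by auto
  have tailNy: "infsum Ny (I - J) \<le> e / (3 * Kd)"
    using J infsum_split_fin[OF sNy J(1,2)] by (simp add: dist_real_def)
  have tailNy0: "infsum Ny (I - J) \<ge> 0" by (intro infsum_nonneg) (auto simp: Ny_def)
  have KdT: "Kd * infsum Ny (I - J) \<le> e / 3"
    using mult_left_mono[OF tailNy, of Kd] Kd0 by simp
  define \<epsilon> where "\<epsilon> = e / (3 * (real (card J) + 1))"
  have \<epsilon>0: "\<epsilon> > 0" using e by (simp add: \<epsilon>_def)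
  have cJ: "real (card J) * \<epsilon> \<le> e / 3"
  proof -
    have "real (card J) * \<epsilon> = (e / 3) * (real (card J) / (real (card J) + 1))"
      by (simp add: \<epsilon>_def field_simps)
    also have "\<dots> \<le> (e / 3) * 1" using e by (intro mult_left_mono) auto
    finally show ?thesis by simp
  qed
  have pw: "\<forall>i\<in>J. eventually (\<lambda>l. norm (y i + A i (x l i)) powr p
              \<le> norm (y i) powr p + C powr p * norm (x l i) powr p + \<epsilon>) F"
  proof
    fix i assume i: "i \<in> J"
    then have iI: "i \<in> I" using J by auto
    show "eventually (\<lambda>l. norm (y i + A i (x l i)) powr p
              \<le> norm (y i) powr p + C powr p * norm (x l i) powr p + \<epsilon>) F"
    proof (rule tp_pointwise[where S="X i" and T="Y i" and M=\<sigma>])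
      show "tp p (X i) norm (Y i) norm (A i) < ereal C" using tpC iI by blast
      show "0 \<in> X i" using Xs iI by (simp add: subspace_0)
      show "y i \<in> Y i" using y iI by (simp add: lp_sum_def)
      show "weakly_null (X i) norm F (\<lambda>l. x l i)"
        by (rule coord_wn[where SS="lp_sum p I X" and N="lp_norm p I"])
           (use wn iI lp_coord[OF p0, of _ I X i] in \<open>auto simp: lp_sum_def\<close>)
      show "\<forall>l. x l i \<in> X i \<and> norm (x l i) \<le> \<sigma>"
      proof
        fix l
        have "norm (x l i) \<le> lp_norm p I (x l)" using xb iI by (intro lp_coord[OF p0]) auto
        moreover have "lp_norm p I (x l) \<le> \<sigma>" using xb by blast
        moreover have "x l i \<in> X i" using xb iI by (auto simp: lp_sum_def)
        ultimately show "x l i \<in> X i \<and> norm (x l i) \<le> \<sigma>" by linarith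
      qed
    qed (use C p0 \<epsilon>0 in auto)
  qed
  have ev: "eventually (\<lambda>l. \<forall>i\<in>J. norm (y i + A i (x l i)) powr p
              \<le> norm (y i) powr p + C powr p * norm (x l i) powr p + \<epsilon>) F"
    using J(1) pw by (rule eventually_ball_finite)
  have "eventually (\<lambda>l. lp_norm p I (y + diag_op I A (x l)) powr p
           \<le> lp_norm p I y powr p + C powr p * \<sigma> powr p + e) F"
    using ev
  proof eventually_elim
    case (elim l)
    define Nx where "Nx = (\<lambda>i. norm (x l i) powr p)"
    have sNx: "Nx summable_on I" using xb lp_summable[of "x l" p I X] by (simp add: Nx_def)
    have Sx: "infsum Nx I \<le> \<sigma> powr p"
    proof -
      have "lp_norm p I (x l) powr p \<le> \<sigma> powr p" using xb p0 by (intro powr_mono2) (auto simp: lp_norm_def)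
      then show ?thesis using lp_norm_pow[OF p0, of I "x l"] by (simp add: Nx_def)
    qed
    define g where "g = (\<lambda>i. norm ((y + diag_op I A (x l)) i) powr p)"
    have gI: "g i = norm (y i + A i (x l i)) powr p" if "i \<in> I" for i
      using that by (simp add: g_def diag_op_def)
    have val: "lp_norm p I (y + diag_op I A (x l)) powr p = infsum g I"
      using lp_norm_pow[OF p0, of I "y + diag_op I A (x l)"] by (simp add: g_def)
    have bound0: "0 \<le> lp_norm p I y powr p + C powr p * \<sigma> powr p + e" using e by simp
    show ?case
    proof (cases "g summable_on I")
      case False
      then show ?thesis using val bound0 by (simp add: infsum_not_exists)
    next
    case True
    have Jpart: "sum g J \<le> sum Ny J + Cp * sum Nx J + real (card J) * \<epsilon>"
    proof -
      have "sum g J \<le> sum (\<lambda>i. Ny i + Cp * Nx i + \<epsilon>) J"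
        using elim J(2) by (intro sum_mono) (auto simp: gI Ny_def Nx_def Cp_def)
      also have "\<dots> = sum Ny J + Cp * sum Nx J + real (card J) * \<epsilon>"
        by (simp add: sum.distrib sum_distrib_left)
      finally show ?thesis .
    qed
    have sNyT: "Ny summable_on (I - J)" using sNy by (rule summable_on_subset_banach) auto
    have sNxT: "Nx summable_on (I - J)" using sNx by (rule summable_on_subset_banach) auto
    have sgT: "g summable_on (I - J)" using True by (rule summable_on_subset_banach) auto
    have Tpart: "infsum g (I - J) \<le> q * Cp * infsum Nx (I - J) + Kd * infsum Ny (I - J)"
    proof -
      have "infsum g (I - J) \<le> infsum (\<lambda>i. (q * Cp) * Nx i + Kd * Ny i) (I - J)"
      proof (rule infsum_mono[OF sgT])
        show "(\<lambda>i. (q * Cp) * Nx i + Kd * Ny i) summable_on (I - J)"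
          by (intro summable_on_add summable_on_cmult_right sNyT sNxT)
        fix i assume i: "i \<in> I - J"
        then have iI: "i \<in> I" by simp
        have "norm (A i (x l i)) \<le> opnorm_on (X i) norm norm (A i) * norm (x l i)"
          using opnorm_facts(3)[of "X i" "Y i" "A i" "x l i"] bl Xs xb iI by (auto simp: lp_sum_def)
        also have "\<dots> \<le> C * norm (x l i)" using Cge iI by (intro mult_right_mono) auto
        finally have "norm (y i + A i (x l i)) \<le> norm (y i) + C * norm (x l i)"
          by (meson add_left_mono norm_triangle_ineq order_trans)
        then have "g i \<le> (norm (y i) + C * norm (x l i)) powr p"
          using gI[OF iI] p0 by (auto intro!: powr_mono2)
        also have "\<dots> \<le> q * (C * norm (x l i)) powr p + Kd * norm (y i) powr p"
          unfolding q_def Kd_def using C d p by (intro conv_ineq) auto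
        also have "(C * norm (x l i)) powr p = Cp * Nx i" using C by (simp add: Cp_def Nx_def powr_mult)
        finally show "g i \<le> (q * Cp) * Nx i + Kd * Ny i" by (simp add: Ny_def mult.assoc)
      qed
      also have "\<dots> = q * Cp * infsum Nx (I - J) + Kd * infsum Ny (I - J)"
        by (subst infsum_add) (auto intro: summable_on_cmult_right sNyT sNxT simp: infsum_cmult_right')
      finally show ?thesis .
    qed
    have gsplit: "infsum g I = sum g J + infsum g (I - J)" using infsum_split_fin[OF True J(1,2)] .
    have xsplit: "infsum Nx I = sum Nx J + infsum Nx (I - J)" using infsum_split_fin[OF sNx J(1,2)] .
    have ysplit: "infsum Ny I = sum Ny J + infsum Ny (I - J)" using infsum_split_fin[OF sNy J(1,2)] .
    have nx0: "sum Nx J \<ge> 0" "infsum Nx (I - J) \<ge> 0"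
      by (auto simp: Nx_def intro!: sum_nonneg infsum_nonneg)
    have a1: "Cp * sum Nx J \<le> q * Cp * sum Nx J" using q1 Cp0 nx0 by (simp add: mult_right_mono)
    have a2: "q * Cp * infsum Nx I \<le> q * Cp * \<sigma> powr p" using Sx q1 Cp0 by (intro mult_left_mono) auto
    have a3: "q * Cp * \<sigma> powr p = SP + (q - 1) * SP" by (simp add: SP_def algebra_simps)
    have "infsum g I \<le> infsum Ny I + q * Cp * infsum Nx I + e / 3 + e / 3"
      using gsplit Jpart Tpart cJ KdT a1 xsplit ysplit tailNy0
      by (simp add: algebra_simps)
    then have "infsum g I \<le> infsum Ny I + SP + e"
      using a2 a3 qSP by linarith
    then show ?thesis using val Sy by (simp add: SP_def Cp_def)
    qed
  qed
  then have "Limsup F (\<lambda>l. ereal (lp_norm p I (y + diag_op I A (x l)) powr p))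
      \<le> ereal (lp_norm p I y powr p + C powr p * \<sigma> powr p + e)"
    by (intro Limsup_bounded) (auto elim: eventually_mono)
  then show "Limsup F (\<lambda>l. ereal (lp_norm p I (y + diag_op I A (x l)) powr p))
      \<le> ereal (lp_norm p I y powr p + C powr p * \<sigma> powr p) + ereal e" by simp
qed

lemma c0_main:
  fixes I :: "'i set" and X :: "'i \<Rightarrow> 'x::real_normed_vector set" and Y :: "'i \<Rightarrow> 'y::real_normed_vector set"
    and A :: "'i \<Rightarrow> 'x \<Rightarrow> 'y" and x :: "'l \<Rightarrow> 'i \<Rightarrow> 'x" and F :: "'l filter"
  assumes I: "I \<noteq> {}" and C: "C > 0"
    and Xs: "\<forall>i\<in>I. subspace (X i)"
    and bl: "\<forall>i\<in>I. bounded_linear_on (X i) norm (Y i) norm (A i)"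
    and Cge: "\<forall>i\<in>I. opnorm_on (X i) norm norm (A i) \<le> C"
    and tpC: "\<forall>i\<in>I. tinf (X i) norm (Y i) norm (A i) < ereal C"
    and y: "y \<in> c0_sum I Y" and \<sigma>: "\<sigma> > 0"
    and xb: "\<forall>l. x l \<in> c0_sum I X \<and> sup_norm I (x l) \<le> \<sigma>"
    and wn: "weakly_null (c0_sum I X) (sup_norm I) F x"
  shows "Limsup F (\<lambda>l. ereal (sup_norm I (y + diag_op I A (x l))))
           \<le> ereal (max (sup_norm I y) (C * \<sigma>))"
proof (rule ereal_le_epsilon2)
  fix e :: real assume e: "e > 0"
  define J where "J = {i\<in>I. norm (y i) \<ge> e / 2}"
  have J: "finite J" "J \<subseteq> I"
    using y e unfolding J_def c0_sum_def by (auto dest: spec[of _ "e/2"])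
  have xc: "norm (x l i) \<le> \<sigma>" if "i \<in> I" for l i
  proof -
    have "norm (x l i) \<le> sup_norm I (x l)" using xb that by (intro c0_coord) auto
    moreover have "sup_norm I (x l) \<le> \<sigma>" using xb by blast
    ultimately show ?thesis by linarith
  qed
  have pw: "\<forall>i\<in>J. eventually (\<lambda>l. norm (y i + A i (x l i))
              \<le> max (norm (y i)) (C * norm (x l i)) + e / 2) F"
  proof
    fix i assume i: "i \<in> J"
    then have iI: "i \<in> I" using J by auto
    show "eventually (\<lambda>l. norm (y i + A i (x l i))
              \<le> max (norm (y i)) (C * norm (x l i)) + e / 2) F"
    proof (rule tinf_pointwise[where S="X i" and T="Y i" and M=\<sigma>])
      show "tinf (X i) norm (Y i) norm (A i) < ereal C" using tpC iI by blast
      show "0 \<in> X i" using Xs iI by (simp add: subspace_0)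
      show "y i \<in> Y i" using y iI by (simp add: c0_sum_def)
      show "weakly_null (X i) norm F (\<lambda>l. x l i)"
        by (rule coord_wn[where SS="c0_sum I X" and N="sup_norm I"])
           (use wn iI c0_coord[of _ I X i] in \<open>auto simp: c0_sum_def\<close>)
      show "\<forall>l. x l i \<in> X i \<and> norm (x l i) \<le> \<sigma>"
        using xb iI xc by (auto simp: c0_sum_def)
    qed (use C e in auto)
  qed
  have ev: "eventually (\<lambda>l. \<forall>i\<in>J. norm (y i + A i (x l i))
              \<le> max (norm (y i)) (C * norm (x l i)) + e / 2) F"
    using J(1) pw by (rule eventually_ball_finite)
  have "eventually (\<lambda>l. sup_norm I (y + diag_op I A (x l)) \<le> max (sup_norm I y) (C * \<sigma>) + e) F"
    using ev
  proof eventually_elim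
    case (elim l)
    show ?case unfolding sup_norm_def[of I "y + diag_op I A (x l)"]
    proof (rule cSUP_least[OF I])
      fix i assume iI: "i \<in> I"
      have yi: "norm (y i) \<le> sup_norm I y" using y iI by (rule c0_coord)
      have Cx: "C * norm (x l i) \<le> C * \<sigma>" using xc[OF iI] C by simp
      have "norm (A i (x l i)) \<le> opnorm_on (X i) norm norm (A i) * norm (x l i)"
        using opnorm_facts(3)[of "X i" "Y i" "A i" "x l i"] bl Xs xb iI by (auto simp: c0_sum_def)
      also have "\<dots> \<le> C * norm (x l i)" using Cge iI by (intro mult_right_mono) auto
      finally have Ax: "norm (A i (x l i)) \<le> C * norm (x l i)" .
      have "norm (y i + A i (x l i)) \<le> max (sup_norm I y) (C * \<sigma>) + e"
      proof (cases "i \<in> J")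
        case True
        then have "norm (y i + A i (x l i)) \<le> max (norm (y i)) (C * norm (x l i)) + e / 2" using elim by blast
        then show ?thesis using yi Cx e by linarith
      next
        case False
        then have "norm (y i) < e / 2" using iI by (auto simp: J_def)
        moreover have "norm (y i + A i (x l i)) \<le> norm (y i) + norm (A i (x l i))" by (rule norm_triangle_ineq)
        ultimately show ?thesis using Ax Cx e by linarith
      qed
      then show "norm ((y + diag_op I A (x l)) i) \<le> max (sup_norm I y) (C * \<sigma>) + e"
        using iI by (simp add: diag_op_def)
    qed
  qed
  then have "Limsup F (\<lambda>l. ereal (sup_norm I (y + diag_op I A (x l))))
      \<le> ereal (max (sup_norm I y) (C * \<sigma>) + e)"
    by (intro Limsup_bounded) (auto elim: eventually_mono)
  then show "Limsup F (\<lambda>l. ereal (sup_norm I (y + diag_op I A (x l))))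
      \<le> ereal (max (sup_norm I y) (C * \<sigma>)) + ereal e"
    by (metis plus_ereal.simps(1))
qed

theorem proposition5p1:
  fixes I :: "'i set"
    and X :: "'i \<Rightarrow> 'x::banach set" and Y :: "'i \<Rightarrow> 'y::banach set"
    and A :: "'i \<Rightarrow> 'x \<Rightarrow> 'y" and p :: real
  assumes "I \<noteq> {}"
    and "1 < p"
    and "\<And>i. i \<in> I \<Longrightarrow> subspace (X i) \<and> closed (X i)"
    and "\<And>i. i \<in> I \<Longrightarrow> subspace (Y i) \<and> closed (Y i)"
    and "\<And>i. i \<in> I \<Longrightarrow> bounded_linear_on (X i) norm (Y i) norm (A i)"
    and "bdd_above ((\<lambda>i. opnorm_on (X i) norm norm (A i)) ` I)"
  shows "tp p (lp_sum p I X) (lp_norm p I) (lp_sum p I Y) (lp_norm p I) (diag_op I A)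
           \<le> (SUP i\<in>I. max (tp p (X i) norm (Y i) norm (A i)) (ereal (opnorm_on (X i) norm norm (A i))))
         \<and> tinf (c0_sum I X) (sup_norm I) (c0_sum I Y) (sup_norm I) (diag_op I A)
           \<le> (SUP i\<in>I. max (tinf (X i) norm (Y i) norm (A i)) (ereal (opnorm_on (X i) norm norm (A i))))"
proof
  have Xs: "\<forall>i\<in>I. subspace (X i)" using assms(3) by blast
  have bl: "\<forall>i\<in>I. bounded_linear_on (X i) norm (Y i) norm (A i)" using assms(5) by blast
  obtain i0 where i0: "i0 \<in> I" using assms(1) by blast
  have op0: "opnorm_on (X i) norm norm (A i) \<ge> 0" if "i \<in> I" for i
    using opnorm_facts(2) bl Xs that by blast
  show "tp p (lp_sum p I X) (lp_norm p I) (lp_sum p I Y) (lp_norm p I) (diag_op I A)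
           \<le> (SUP i\<in>I. max (tp p (X i) norm (Y i) norm (A i)) (ereal (opnorm_on (X i) norm norm (A i))))"
    (is "?L \<le> ?R")
  proof (rule dense_ge)
    fix z assume z: "?R < z"
    show "?L \<le> z"
    proof (cases z)
      case PInf then show ?thesis by simp
    next
      case MInf then show ?thesis using z by simp
    next
      case (real C)
      have iR: "max (tp p (X i) norm (Y i) norm (A i)) (ereal (opnorm_on (X i) norm norm (A i))) \<le> ?R"
        if "i \<in> I" for i using that by (rule SUP_upper)
      have RC: "?R < ereal C" using z real by simp
      have opC: "ereal (opnorm_on (X i) norm norm (A i)) < ereal C" if "i \<in> I" for i
        using order_trans[OF max.cobounded2 iR[OF that]] RC by (rule order_le_less_trans)
      have tpC: "\<forall>i\<in>I. tp p (X i) norm (Y i) norm (A i) < ereal C"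
        using order_trans[OF max.cobounded1 iR] RC order_le_less_trans by blast
      have Cge: "\<forall>i\<in>I. opnorm_on (X i) norm norm (A i) \<le> C"
        using opC by (simp add: less_imp_le)
      have C: "C > 0"
        using opC[OF i0] op0[OF i0] by simp
      have "?L \<le> ereal C" unfolding tp_def
      proof (rule Inf_lower, rule imageI, safe)
        show "0 < C" by (rule C)
        fix y \<sigma> and F :: "('i \<Rightarrow> 'x) filter" and x :: "('i \<Rightarrow> 'x) \<Rightarrow> 'i \<Rightarrow> 'x"
        assume "y \<in> lp_sum p I Y" "\<sigma> > 0" "\<forall>l. x l \<in> lp_sum p I X \<and> lp_norm p I (x l) \<le> \<sigma>"
          "weakly_null (lp_sum p I X) (lp_norm p I) F x"
        then show "Limsup F (\<lambda>l. ereal (lp_norm p I (y + diag_op I A (x l)) powr p))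
           \<le> ereal (lp_norm p I y powr p + C powr p * \<sigma> powr p)"
          using lp_main[OF assms(2) C Xs bl Cge tpC] by blast
      qed
      then show ?thesis using real by simp
    qed
  qed
  show "tinf (c0_sum I X) (sup_norm I) (c0_sum I Y) (sup_norm I) (diag_op I A)
           \<le> (SUP i\<in>I. max (tinf (X i) norm (Y i) norm (A i)) (ereal (opnorm_on (X i) norm norm (A i))))"
    (is "?L \<le> ?R")
  proof (rule dense_ge)
    fix z assume z: "?R < z"
    show "?L \<le> z"
    proof (cases z)
      case PInf then show ?thesis by simp
    next
      case MInf then show ?thesis using z by simp
    next
      case (real C)
      have iR: "max (tinf (X i) norm (Y i) norm (A i)) (ereal (opnorm_on (X i) norm norm (A i))) \<le> ?R"
        if "i \<in> I" for i using that by (rule SUP_upper)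
      have RC: "?R < ereal C" using z real by simp
      have opC: "ereal (opnorm_on (X i) norm norm (A i)) < ereal C" if "i \<in> I" for i
        using order_trans[OF max.cobounded2 iR[OF that]] RC by (rule order_le_less_trans)
      have tpC: "\<forall>i\<in>I. tinf (X i) norm (Y i) norm (A i) < ereal C"
        using order_trans[OF max.cobounded1 iR] RC order_le_less_trans by blast
      have Cge: "\<forall>i\<in>I. opnorm_on (X i) norm norm (A i) \<le> C"
        using opC by (simp add: less_imp_le)
      have C: "C > 0"
        using opC[OF i0] op0[OF i0] by simp
      have "?L \<le> ereal C" unfolding tinf_def
      proof (rule Inf_lower, rule imageI, safe)
        show "0 < C" by (rule C)
        fix y \<sigma> and F :: "('i \<Rightarrow> 'x) filter" and x :: "('i \<Rightarrow> 'x) \<Rightarrow> 'i \<Rightarrow> 'x"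
        assume "y \<in> c0_sum I Y" "\<sigma> > 0" "\<forall>l. x l \<in> c0_sum I X \<and> sup_norm I (x l) \<le> \<sigma>"
          "weakly_null (c0_sum I X) (sup_norm I) F x"
        then show "Limsup F (\<lambda>l. ereal (sup_norm I (y + diag_op I A (x l))))
           \<le> ereal (max (sup_norm I y) (C * \<sigma>))"
          using c0_main[OF assms(1) C Xs bl Cge tpC] by blast
      qed
      then show ?thesis using real by simp
    qed
  qed
qed

end
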